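(* Assume values are i.i.d. on $[0,\bar v]$ with CDF $F$ and density $f>0$, and $1 \le k < n$. Let $A$ be the efficient allocation rule. Let $v_{(k+1)}$ denote the $(k+1)$-st highest value, and define $b(0) = 0$ and, for $v > 0$, $b(v) = \mathbb E[v_{(k+1)} \mid v_i = v, A_i(\bm v) = 1]$. Define $R^D(\bm v) = \sum_{i=1}^n A_i(\bm v)\,b(v_i)$ (revenue of the discriminatory winner-pays-bid auction in its symmetric strictly increasing equilibrium) and $R^U(\bm v) = k\,v_{(k+1)}$ (revenue of the uniform $(k+1)$-st price auction). Then $\mathrm{Var}[R^D(\bm v)] \le \mathrm{Var}[R^U(\bm v)]$.
   Context: Setting: $n$ risk-neutral unit-demand bidders and $k$ identical items. The efficient allocation rule gives one item to each of the $k$ bidders with the highest values (ties, a probability-zero event, broken by any fixed rule). *)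

theory Defs
  imports "HOL-Probability.Probability"
begin

definition value_dist :: "(real \<Rightarrow> real) \<Rightarrow> real \<Rightarrow> real measure" where
  "value_dist f vbar = density lborel (\<lambda>x. ennreal (f x * indicator {0..vbar} x))"

definition profile_dist :: "nat \<Rightarrow> (real \<Rightarrow> real) \<Rightarrow> real \<Rightarrow> (nat \<Rightarrow> real) measure" where
  "profile_dist n f vbar = PiM {..<n} (\<lambda>_. value_dist f vbar)"

definition eff_alloc :: "nat \<Rightarrow> nat \<Rightarrow> nat \<Rightarrow> (nat \<Rightarrow> real) \<Rightarrow> bool" where
  "eff_alloc n k i v \<longleftrightarrow> i < n \<and> card {j \<in> {..<n}. v i < v j \<or> (v j = v i \<and> j < i)} < k"

text \<open>m-th highest value (1-indexed) among v 0, ..., v (n-1).\<close>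
definition order_stat :: "nat \<Rightarrow> (nat \<Rightarrow> real) \<Rightarrow> nat \<Rightarrow> real" where
  "order_stat n v m = rev (sort (map v [0..<n])) ! (m - 1)"

text \<open>b(v) = E[v_(k+1) | v_i = v, A_i = 1] for v > 0 (conditioning on v_i = v computed by
  fixing coordinate i and integrating out the other independent values); b(0) = 0.\<close>
definition bid_fn :: "nat \<Rightarrow> nat \<Rightarrow> (real \<Rightarrow> real) \<Rightarrow> real \<Rightarrow> nat \<Rightarrow> real \<Rightarrow> real" where
  "bid_fn n k f vbar i x =
     (if x \<le> 0 then 0 else
       (\<integral>w. order_stat n (w(i := x)) (k+1) * of_bool (eff_alloc n k i (w(i := x)))
          \<partial>profile_dist n f vbar)
       / measure (profile_dist n f vbar)
           {w \<in> space (profile_dist n f vbar). eff_alloc n k i (w(i := x))})"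

definition rev_disc :: "nat \<Rightarrow> nat \<Rightarrow> (real \<Rightarrow> real) \<Rightarrow> real \<Rightarrow> (nat \<Rightarrow> real) \<Rightarrow> real" where
  "rev_disc n k f vbar v = (\<Sum>i<n. of_bool (eff_alloc n k i v) * bid_fn n k f vbar i (v i))"

definition rev_unif :: "nat \<Rightarrow> nat \<Rightarrow> (nat \<Rightarrow> real) \<Rightarrow> real" where
  "rev_unif n k v = real k * order_stat n v (k+1)"

definition var :: "'a measure \<Rightarrow> ('a \<Rightarrow> real) \<Rightarrow> real" where
  "var M X = (\<integral>x. (X x - (\<integral>y. X y \<partial>M))^2 \<partial>M)"

end

theory Submission
  imports Defs
begin



lemma insort_map: "insort (v x) (map v ys) = map v (insort_key v x ys)"
  by (induction ys) auto

lemma sort_map: "sort (map v xs) = map v (sort_key v xs)"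
  by (induction xs) (auto simp: insort_map)

lemma insort_key_cong:
  "(\<forall>a\<in>set (x#ys). \<forall>b\<in>set (x#ys). (f a \<le> f b) = (g a \<le> g b)) \<Longrightarrow> insort_key f x ys = insort_key g x ys"
  by (induction ys) auto

lemma sort_key_cong:
  "(\<forall>a\<in>set xs. \<forall>b\<in>set xs. (f a \<le> f b) = (g a \<le> g b)) \<Longrightarrow> sort_key f xs = sort_key g xs"
proof (induction xs)
  case Nil then show ?case by simp
next
  case (Cons x xs)
  have "sort_key f xs = sort_key g xs" using Cons by auto
  moreover have "\<forall>a\<in>set (x#sort_key g xs). \<forall>b\<in>set (x#sort_key g xs). (f a \<le> f b) = (g a \<le> g b)"
    using Cons.prems by simp
  ultimately show ?case by (simp add: insort_key_cong)
qed

definition idx :: "nat \<Rightarrow> (nat \<Rightarrow> real) \<Rightarrow> nat \<Rightarrow> nat" where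
  "idx n v m = rev (sort_key v [0..<n]) ! (m - 1)"

lemma order_stat_idx: "order_stat n v m = (if m - 1 < n then v (idx n v m) else order_stat n v m)"
  by (auto simp: order_stat_def idx_def sort_map rev_map)

lemma idx_lt: "m - 1 < n \<Longrightarrow> idx n v m < n"
proof -
  assume a: "m - 1 < n"
  have "idx n v m \<in> set (rev (sort_key v [0..<n]))" unfolding idx_def using a by (intro nth_mem) simp
  then show ?thesis by simp
qed

lemma order_stat_bounds:
  assumes "m - 1 < n" "\<forall>j<n. lo \<le> u j \<and> u j \<le> hi"
  shows "lo \<le> order_stat n u m \<and> order_stat n u m \<le> hi"
proof -
  have "order_stat n u m = u (idx n u m)" using assms(1) order_stat_idx by metis
  then show ?thesis using idx_lt[OF assms(1)] assms(2) by auto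
qed

lemma idx_cong: "(\<forall>a<n. \<forall>b<n. (v a \<le> v b) = (u a \<le> u b)) \<Longrightarrow> idx n v m = idx n u m"
  unfolding idx_def by (subst sort_key_cong[of _ v u]) auto

lemma rank_count:
  fixes R :: "'a \<Rightarrow> 'a \<Rightarrow> bool"
  assumes fin: "finite A" and irr: "\<And>x. \<not> R x x" and tr: "\<And>x y z. R x y \<Longrightarrow> R y z \<Longrightarrow> R x z"
    and tot: "\<And>x y. x \<in> A \<Longrightarrow> y \<in> A \<Longrightarrow> x \<noteq> y \<Longrightarrow> R x y \<or> R y x"
    and k: "k \<le> card A"
  shows "card {i\<in>A. card {j\<in>A. R i j} < k} = k"
proof -
  define r where "r i = card {j\<in>A. R i j}" for i
  have lt: "r j < r i" if "i \<in> A" "j \<in> A" "R i j" for i j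
  proof -
    have "{l\<in>A. R j l} \<subset> {l\<in>A. R i l}"
    proof
      show "{l\<in>A. R j l} \<subseteq> {l\<in>A. R i l}" using that tr by blast
      show "{l\<in>A. R j l} \<noteq> {l\<in>A. R i l}" using that irr by blast
    qed
    then show ?thesis unfolding r_def using fin by (intro psubset_card_mono) auto
  qed
  have inj: "inj_on r A"
  proof (rule inj_onI)
    fix x y assume "x \<in> A" "y \<in> A" "r x = r y"
    then show "x = y" using tot[of x y] lt[of x y] lt[of y x] by fastforce
  qed
  have rng: "r ` A \<subseteq> {..<card A}"
  proof
    fix y assume "y \<in> r ` A"
    then obtain i where i: "i \<in> A" "y = r i" by auto
    have "{j\<in>A. R i j} \<subset> A" using i irr by auto
    then show "y \<in> {..<card A}" using i fin unfolding r_def by (auto intro: psubset_card_mono)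
  qed
  have "card (r ` A) = card A" using inj card_image by blast
  then have img: "r ` A = {..<card A}" using rng by (intro card_subset_eq) auto
  have bij: "bij_betw r A {..<card A}" using inj img by (simp add: bij_betw_def)
  have "{i\<in>A. r i < k} = A \<inter> r -` {..<k}" by auto
  have "card {i\<in>A. r i < k} = card (r ` {i\<in>A. r i < k})"
    using inj by (intro card_image[symmetric]) (auto intro: inj_on_subset)
  also have "r ` {i\<in>A. r i < k} = {..<k}"
  proof
    show "r ` {i\<in>A. r i < k} \<subseteq> {..<k}" by auto
    show "{..<k} \<subseteq> r ` {i\<in>A. r i < k}"
    proof
      fix y assume y: "y \<in> {..<k}"
      then have "y \<in> r ` A" using img k by auto
      then obtain i where "i \<in> A" "y = r i" by auto
      then show "y \<in> r ` {i\<in>A. r i < k}" using y by auto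
    qed
  qed
  finally show ?thesis unfolding r_def by simp
qed

lemma card_winners:
  assumes "k \<le> n"
  shows "card {i\<in>{..<n}. eff_alloc n k i v} = k"
proof -
  have "card {i\<in>{..<n}. card {j\<in>{..<n}. (\<lambda>i j. v i < v j \<or> (v j = v i \<and> j < i)) i j} < k} = k"
    by (rule rank_count) (use assms in auto)
  then show ?thesis unfolding eff_alloc_def by (simp add: conj_commute cong: conj_cong)
qed

lemma sum_winners:
  assumes "k \<le> n"
  shows "(\<Sum>i<n. of_bool (eff_alloc n k i v) :: real) = real k"
proof -
  have "(\<Sum>i<n. of_bool (eff_alloc n k i v) :: real) = (\<Sum>i\<in>{i\<in>{..<n}. eff_alloc n k i v}. 1)"
    by (simp add: sum.If_cases Int_def of_bool_def)
  then show ?thesis using card_winners[OF assms] by simp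
qed




lemma cmp_measurable:
  fixes H :: "(nat \<Rightarrow> real) \<Rightarrow> 'b::countable"
  assumes F: "\<And>j. j < n \<Longrightarrow> (\<lambda>x. F x j) \<in> borel_measurable N"
  and H: "\<And>u w. (\<forall>a<n. \<forall>b<n. (u a \<le> u b) = (w a \<le> w b)) \<Longrightarrow> H u = H w"
  shows "(\<lambda>x. H (F x)) \<in> measurable N (count_space UNIV)"
proof -
  define S where "S = {..<n} \<times> {..<n}"
  define C where "C u = {p\<in>S. u (fst p) \<le> u (snd p)}" for u :: "nat \<Rightarrow> real"
  have finS: "finite S" unfolding S_def by simp
  have HC: "H u = H w" if "C u = C w" for u w
  proof (rule H, intro allI impI)
    fix a b assume "a < n" "b < n"
    then have "(a,b) \<in> S" unfolding S_def by simp
    then show "(u a \<le> u b) = (w a \<le> w b)" using that unfolding C_def set_eq_iff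
      by (metis (no_types, lifting) fst_conv mem_Collect_eq snd_conv)
  qed
  have pl: "{x\<in>space N. (F x a \<le> F x b) = Q} \<in> sets N" if "(a,b) \<in> S" for a b Q
  proof -
    have [measurable]: "(\<lambda>x. F x a) \<in> borel_measurable N" "(\<lambda>x. F x b) \<in> borel_measurable N"
      using that F unfolding S_def by auto
    show ?thesis by measurable
  qed
  have setT: "{x\<in>space N. C (F x) = T} \<in> sets N" if "T \<subseteq> S" for T
  proof -
    have "{x\<in>space N. C (F x) = T} = {x\<in>space N. \<forall>p\<in>S. (F x (fst p) \<le> F x (snd p)) = (p \<in> T)}"
      using that unfolding C_def by auto
    also have "\<dots> \<in> sets N"
      using finS pl by (intro sets.sets_Collect_finite_All) auto
    finally show ?thesis .
  qed
  show ?thesis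
  proof (subst measurable_count_space_eq2_countable, intro conjI ballI)
    fix y
    define Ts where "Ts = {T. T \<subseteq> S \<and> (\<exists>u. C u = T \<and> H u = y)}"
    have "(\<lambda>x. H (F x)) -` {y} \<inter> space N = (\<Union>T\<in>Ts. {x\<in>space N. C (F x) = T})"
    proof (intro equalityI subsetI)
      fix x assume "x \<in> (\<lambda>x. H (F x)) -` {y} \<inter> space N"
      then have "x \<in> space N" "H (F x) = y" by auto
      moreover have "C (F x) \<in> Ts" using \<open>H (F x) = y\<close> unfolding Ts_def by (auto simp: C_def)
      ultimately show "x \<in> (\<Union>T\<in>Ts. {x\<in>space N. C (F x) = T})" by auto
    next
      fix x assume "x \<in> (\<Union>T\<in>Ts. {x\<in>space N. C (F x) = T})"
      then obtain T where "T \<in> Ts" "x \<in> space N" "C (F x) = T" by auto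
      then obtain u where "C u = T" "H u = y" unfolding Ts_def by auto
      then have "H (F x) = y" using HC \<open>C (F x) = T\<close> by metis
      then show "x \<in> (\<lambda>x. H (F x)) -` {y} \<inter> space N" using \<open>x \<in> space N\<close> by simp
    qed
    also have "\<dots> \<in> sets N"
      using finS setT by (intro sets.finite_UN) (auto simp: Ts_def)
    finally show "(\<lambda>x. H (F x)) -` {y} \<inter> space N \<in> sets N" .
  qed auto
qed

lemma eff_alloc_measurable:
  assumes F: "\<And>j. j < n \<Longrightarrow> (\<lambda>x. F x j) \<in> borel_measurable N"
  shows "(\<lambda>x. eff_alloc n k i (F x)) \<in> measurable N (count_space UNIV)"
proof (rule cmp_measurable[where n=n, OF F])
  fix u w :: "nat \<Rightarrow> real" assume h: "\<forall>a<n. \<forall>b<n. (u a \<le> u b) = (w a \<le> w b)"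
  show "eff_alloc n k i u = eff_alloc n k i w"
  proof (cases "i < n")
    case True
    have "{j \<in> {..<n}. u i < u j \<or> (u j = u i \<and> j < i)} = {j \<in> {..<n}. w i < w j \<or> (w j = w i \<and> j < i)}"
      using h True by (auto simp: less_le_not_le order_eq_iff)
    then show ?thesis unfolding eff_alloc_def by simp
  qed (simp add: eff_alloc_def)
qed

lemma eff_alloc_pred:
  assumes F: "\<And>j. j < n \<Longrightarrow> (\<lambda>x. F x j) \<in> borel_measurable N"
  shows "{x\<in>space N. eff_alloc n k i (F x)} \<in> sets N"
proof -
  have "(\<lambda>x. eff_alloc n k i (F x)) \<in> measurable N (count_space UNIV)"
    by (rule eff_alloc_measurable[OF F])
  then have "(\<lambda>x. eff_alloc n k i (F x)) -` {True} \<inter> space N \<in> sets N"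
    by (rule measurable_sets) simp
  also have "(\<lambda>x. eff_alloc n k i (F x)) -` {True} \<inter> space N = {x\<in>space N. eff_alloc n k i (F x)}"
    by auto
  finally show ?thesis .
qed

lemma alloc_borel:
  assumes F: "\<And>j. j < n \<Longrightarrow> (\<lambda>x. F x j) \<in> borel_measurable N"
  shows "(\<lambda>x. of_bool (eff_alloc n k i (F x)) :: real) \<in> borel_measurable N"
proof -
  have "(\<lambda>x. eff_alloc n k i (F x)) \<in> measurable N (count_space UNIV)"
    by (rule eff_alloc_measurable[OF F])
  then show ?thesis by (rule measurable_compose) simp
qed

lemma order_stat_measurable:
  assumes F: "\<And>j. j < n \<Longrightarrow> (\<lambda>x. F x j) \<in> borel_measurable N" and m: "m - 1 < n"
  shows "(\<lambda>x. order_stat n (F x) m) \<in> borel_measurable N"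
proof -
  have idxm: "(\<lambda>x. idx n (F x) m) \<in> measurable N (count_space UNIV)"
    by (rule cmp_measurable[where n=n, OF F]) (simp_all add: idx_cong)
  have "(\<lambda>x. order_stat n (F x) m) = (\<lambda>x. \<Sum>j<n. F x j * of_bool (idx n (F x) m = j))"
  proof
    fix x
    have "(\<Sum>j<n. F x j * of_bool (idx n (F x) m = j)) = (\<Sum>j<n. if idx n (F x) m = j then F x j else 0)"
      by (intro sum.cong) auto
    also have "\<dots> = F x (idx n (F x) m)" using idx_lt[OF m] by simp
    finally have "(\<Sum>j<n. F x j * of_bool (idx n (F x) m = j)) = F x (idx n (F x) m)" .
    then show "order_stat n (F x) m = (\<Sum>j<n. F x j * of_bool (idx n (F x) m = j))"
      using order_stat_idx m by metis
  qed
  moreover have "(\<lambda>x. \<Sum>j<n. F x j * of_bool (idx n (F x) m = j)) \<in> borel_measurable N"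
  proof (intro borel_measurable_sum borel_measurable_times)
    fix j assume "j \<in> {..<n}"
    then show "(\<lambda>x. F x j) \<in> borel_measurable N" using F by auto
    show "(\<lambda>x. of_bool (idx n (F x) m = j) :: real) \<in> borel_measurable N"
      by (rule measurable_compose[OF idxm]) simp
  qed
  ultimately show ?thesis by simp
qed




context
  fixes n k :: nat and f :: "real \<Rightarrow> real" and vbar :: real
  assumes k1: "1 \<le> k" and kn: "k < n" and vb: "vbar > 0"
    and fm: "f \<in> borel_measurable borel"
    and f1: "(\<integral>\<^sup>+x. ennreal (f x * indicator {0..vbar} x) \<partial>lborel) = 1"
begin

abbreviation "P \<equiv> value_dist f vbar"
abbreviation "M \<equiv> profile_dist n f vbar"

lemma dens_meas: "(\<lambda>x. ennreal (f x * indicator {0..vbar} x)) \<in> borel_measurable lborel"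
  using fm by measurable

lemma sets_P: "sets P = sets borel"
  unfolding value_dist_def by simp

lemma space_P: "space P = UNIV"
  unfolding value_dist_def by simp

lemma probP: "prob_space P"
proof (rule prob_spaceI)
  show "emeasure P (space P) = 1"
    unfolding value_dist_def using f1 dens_meas
    by (subst emeasure_density) (auto simp: space_P)
qed

lemma M_def': "M = PiM {..<n} (\<lambda>_. P)"
  unfolding profile_dist_def ..

lemma probM: "prob_space M"
  unfolding M_def' using probP by (intro prob_space_PiM) auto

lemma compM: "j < n \<Longrightarrow> (\<lambda>v. v j) \<in> borel_measurable M"
proof -
  assume j: "j < n"
  have "(\<lambda>v. v j) \<in> measurable M P" unfolding M_def' using j by (intro measurable_component_singleton) auto
  then show ?thesis using measurable_cong_sets[OF refl sets_P, of M] by simp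
qed

lemma AE_P: "AE x in P. 0 < x \<and> x \<le> vbar"
proof -
  have "AE x in lborel. 0 < ennreal (f x * indicator {0..vbar} x) \<longrightarrow> 0 < x \<and> x \<le> vbar"
    using AE_lborel_singleton[of "0::real"]
    by eventually_elim (auto simp: indicator_def)
  then show ?thesis unfolding value_dist_def using dens_meas by (subst AE_density) auto
qed

lemma AE_M: "AE w in M. \<forall>j\<in>{..<n}. 0 < w j \<and> w j \<le> vbar"
proof -
  show "AE w in M. \<forall>j\<in>{..<n}. 0 < w j \<and> w j \<le> vbar"
  proof (rule AE_finite_allI)
    fix j assume "j \<in> {..<n}"
    then show "AE w in M. 0 < w j \<and> w j \<le> vbar"
      unfolding M_def' using probP AE_P by (intro AE_PiM_component) auto
  qed simp
qed

lemma T_meas: "i < n \<Longrightarrow> (\<lambda>(x, w). w(i := x)) \<in> measurable (P \<Otimes>\<^sub>M M) M"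
proof -
  assume i: "i < n"
  have "(\<lambda>z. (snd z)(i := fst z)) \<in> measurable (P \<Otimes>\<^sub>M M) M"
    unfolding M_def' by (rule measurable_fun_upd[where J="{..<n}", OF _ measurable_snd measurable_fst]) (use i in auto)
  then show ?thesis by (simp add: case_prod_beta')
qed

lemma distrT: "i < n \<Longrightarrow> distr (P \<Otimes>\<^sub>M M) M (\<lambda>(x, w). w(i := x)) = M"
proof -
  assume i: "i < n"
  have "distr (P \<Otimes>\<^sub>M (\<Pi>\<^sub>M j\<in>{..<n}. P)) (\<Pi>\<^sub>M j\<in>insert i {..<n}. P) (\<lambda>(x, X). X(i := x)) =
    (\<Pi>\<^sub>M j\<in>insert i {..<n}. P)"
    using probP by (intro distr_pair_PiM_eq_PiM) auto
  moreover have "insert i {..<n} = {..<n}" using i by auto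
  ultimately show ?thesis unfolding M_def' by simp
qed

lemma decomp:
  fixes h :: "(nat \<Rightarrow> real) \<Rightarrow> real"
  assumes i: "i < n" and h: "integrable M h"
  shows "integrable P (\<lambda>x. \<integral>w. h (w(i := x)) \<partial>M)"
    and "integral\<^sup>L M h = (\<integral>x. (\<integral>w. h (w(i := x)) \<partial>M) \<partial>P)"
proof -
  interpret P: prob_space P by (rule probP)
  interpret M: prob_space M by (rule probM)
  interpret PM: pair_sigma_finite P M
    unfolding pair_sigma_finite_def using P.sigma_finite_measure_axioms M.sigma_finite_measure_axioms by simp
  have hm: "h \<in> borel_measurable M" using h by auto
  have "integrable (distr (P \<Otimes>\<^sub>M M) M (\<lambda>(x, w). w(i := x))) h" using distrT[OF i] h by simp
  then have int2: "integrable (P \<Otimes>\<^sub>M M) (\<lambda>z. h ((\<lambda>(x, w). w(i := x)) z))"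
    using integrable_distr_eq[OF T_meas[OF i] hm] by simp
  have int2': "integrable (P \<Otimes>\<^sub>M M) (\<lambda>(x, w). h (w(i := x)))"
    using int2 by (simp add: case_prod_beta')
  show "integrable P (\<lambda>x. \<integral>w. h (w(i := x)) \<partial>M)"
    using PM.integrable_fst'[OF int2'] by simp
  have "integral\<^sup>L M h = integral\<^sup>L (distr (P \<Otimes>\<^sub>M M) M (\<lambda>(x, w). w(i := x))) h"
    using distrT[OF i] by simp
  also have "\<dots> = integral\<^sup>L (P \<Otimes>\<^sub>M M) (\<lambda>z. h ((\<lambda>(x, w). w(i := x)) z))"
    by (rule integral_distr[OF T_meas[OF i] hm])
  also have "\<dots> = integral\<^sup>L (P \<Otimes>\<^sub>M M) (\<lambda>(x, w). h (w(i := x)))"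
    by (simp add: case_prod_beta')
  also have "\<dots> = (\<integral>x. (\<integral>w. h (w(i := x)) \<partial>M) \<partial>P)"
    using PM.integral_fst'[OF int2'] by simp
  finally show "integral\<^sup>L M h = (\<integral>x. (\<integral>w. h (w(i := x)) \<partial>M) \<partial>P)" .
qed

end



context
  fixes n k :: nat and f :: "real \<Rightarrow> real" and vbar :: real
  assumes k1: "1 \<le> k" and kn: "k < n" and vb: "vbar > 0"
    and fm: "f \<in> borel_measurable borel"
    and f1: "(\<integral>\<^sup>+x. ennreal (f x * indicator {0..vbar} x) \<partial>lborel) = 1"
begin

abbreviation "PP \<equiv> value_dist f vbar"
abbreviation "MM \<equiv> profile_dist n f vbar"
abbreviation "Y v \<equiv> order_stat n v (k+1)"
abbreviation "al i v \<equiv> (of_bool (eff_alloc n k i v) :: real)"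
abbreviation "bb i \<equiv> bid_fn n k f vbar i"

definition "gg i x = (\<integral>w. Y (w(i := x)) * al i (w(i := x)) \<partial>MM)"
definition "pp i x = (\<integral>w. al i (w(i := x)) \<partial>MM)"
definition "qq i x = (\<integral>w. (Y (w(i := x)))\<^sup>2 * al i (w(i := x)) \<partial>MM)"

lemmas probP' = probP[OF k1 kn vb fm f1]
lemmas probM' = probM[OF k1 kn vb fm f1]
lemmas compM' = compM[OF k1 kn vb fm f1]
lemmas AE_P' = AE_P[OF k1 kn vb fm f1]
lemmas AE_M' = AE_M[OF k1 kn vb fm f1]
lemmas decomp' = decomp[OF k1 kn vb fm f1]

lemma km: "k + 1 - 1 < n" using kn by simp

lemma bid_eq: "bb i x = (if x \<le> 0 then 0 else gg i x / pp i x)"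
proof -
  have "pp i x = (\<integral>w. indicator {w. eff_alloc n k i (w(i := x))} w \<partial>MM)"
    unfolding pp_def by (rule Bochner_Integration.integral_cong) (auto simp: indicator_def)
  also have "\<dots> = measure MM ({w. eff_alloc n k i (w(i := x))} \<inter> space MM)"
    by (rule Bochner_Integration.integral_indicator)
  also have "{w. eff_alloc n k i (w(i := x))} \<inter> space MM = {w \<in> space MM. eff_alloc n k i (w(i := x))}"
    by auto
  finally have "measure MM {w \<in> space MM. eff_alloc n k i (w(i := x))} = pp i x" by simp
  then show ?thesis unfolding bid_fn_def gg_def by simp
qed

lemma compFix: "j < n \<Longrightarrow> (\<lambda>w. (w(i := x)) j) \<in> borel_measurable MM"
  using compM' by (cases "j = i") auto

lemma compPair: "j < n \<Longrightarrow> (\<lambda>z. ((snd z)(i := fst z)) j) \<in> borel_measurable (borel \<Otimes>\<^sub>M MM)"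
proof (cases "j = i")
  case True then show ?thesis by simp
next
  case False
  assume j: "j < n"
  have "(\<lambda>z. snd z j) \<in> borel_measurable (borel \<Otimes>\<^sub>M MM)"
    by (rule measurable_compose[OF measurable_snd compM'[OF j]])
  then show ?thesis using False by simp
qed

lemma Ymeas: "(\<lambda>v. Y v) \<in> borel_measurable MM"
  by (rule order_stat_measurable[OF _ km]) (rule compM')

lemma almeas: "(\<lambda>v. al i v) \<in> borel_measurable MM"
  by (rule alloc_borel) (rule compM')

lemma Yfix: "(\<lambda>w. Y (w(i := x))) \<in> borel_measurable MM"
  by (rule order_stat_measurable[OF compFix km])

lemma alfix: "(\<lambda>w. al i (w(i := x))) \<in> borel_measurable MM"
  by (rule alloc_borel[OF compFix])

lemma Ypair: "(\<lambda>z. Y ((snd z)(i := fst z))) \<in> borel_measurable (borel \<Otimes>\<^sub>M MM)"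
  by (rule order_stat_measurable[OF compPair km])

lemma alpair: "(\<lambda>z. al i ((snd z)(i := fst z))) \<in> borel_measurable (borel \<Otimes>\<^sub>M MM)"
  by (rule alloc_borel[OF compPair])

lemma gg_meas: "gg i \<in> borel_measurable borel"
proof -
  interpret M: prob_space MM by (rule probM')
  have "(\<lambda>z. Y ((snd z)(i := fst z)) * al i ((snd z)(i := fst z))) \<in> borel_measurable (borel \<Otimes>\<^sub>M MM)"
    using Ypair alpair by (rule borel_measurable_times)
  then have "case_prod (\<lambda>x w. Y (w(i := x)) * al i (w(i := x))) \<in> borel_measurable (borel \<Otimes>\<^sub>M MM)"
    by (simp add: case_prod_beta')
  then show ?thesis unfolding gg_def[abs_def] by (rule M.borel_measurable_lebesgue_integral)
qed

lemma pp_meas: "pp i \<in> borel_measurable borel"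
proof -
  interpret M: prob_space MM by (rule probM')
  have "case_prod (\<lambda>x w. al i (w(i := x))) \<in> borel_measurable (borel \<Otimes>\<^sub>M MM)"
    using alpair by (simp add: case_prod_beta')
  then show ?thesis unfolding pp_def[abs_def] by (rule M.borel_measurable_lebesgue_integral)
qed

lemma bb_meas: "bb i \<in> borel_measurable borel"
proof -
  have [measurable]: "gg i \<in> borel_measurable borel" "pp i \<in> borel_measurable borel"
    using gg_meas pp_meas by auto
  have "(\<lambda>x. if x \<le> 0 then 0 else gg i x / pp i x) \<in> borel_measurable borel" by measurable
  moreover have "bb i = (\<lambda>x. if x \<le> 0 then 0 else gg i x / pp i x)" by (rule ext) (rule bid_eq)
  ultimately show ?thesis by simp
qed

lemma Yfix_bound:
  assumes x: "0 < x" "x \<le> vbar"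
  shows "AE w in MM. 0 \<le> Y (w(i := x)) \<and> Y (w(i := x)) \<le> vbar"
  using AE_M'
proof eventually_elim
  case (elim w)
  then have "\<forall>j<n. 0 \<le> (w(i := x)) j \<and> (w(i := x)) j \<le> vbar" using x by (force simp: less_imp_le)
  then show ?case using order_stat_bounds[OF km] by blast
qed

lemma intM:
  fixes h :: "(nat \<Rightarrow> real) \<Rightarrow> real"
  assumes "h \<in> borel_measurable MM" "AE v in MM. \<bar>h v\<bar> \<le> B"
  shows "integrable MM h"
proof -
  interpret M: prob_space MM by (rule probM')
  show ?thesis using assms by (intro M.integrable_const_bound[where B=B]) auto
qed

lemma al01: "al i v = 0 \<or> al i v = 1" by simp

lemma fixints:
  assumes x: "0 < x" "x \<le> vbar"
  shows "integrable MM (\<lambda>w. Y (w(i := x)) * al i (w(i := x)))"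
    "integrable MM (\<lambda>w. al i (w(i := x)))"
    "integrable MM (\<lambda>w. (Y (w(i := x)))\<^sup>2 * al i (w(i := x)))"
proof -
  have "AE w in MM. \<bar>Y (w(i := x)) * al i (w(i := x))\<bar> \<le> vbar"
    using Yfix_bound[OF x, of i] by eventually_elim auto
  then show "integrable MM (\<lambda>w. Y (w(i := x)) * al i (w(i := x)))"
    by (intro intM[where B=vbar] borel_measurable_times Yfix alfix)
  show "integrable MM (\<lambda>w. al i (w(i := x)))"
    by (intro intM[where B=1] alfix) auto
  show "integrable MM (\<lambda>w. (Y (w(i := x)))\<^sup>2 * al i (w(i := x)))"
    using Yfix_bound[OF x, of i]
  proof (intro intM[where B="vbar^2"] borel_measurable_times borel_measurable_power Yfix alfix)
    assume "AE w in MM. 0 \<le> Y (w(i := x)) \<and> Y (w(i := x)) \<le> vbar"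
    then show "AE w in MM. \<bar>(Y (w(i := x)))\<^sup>2 * al i (w(i := x))\<bar> \<le> vbar\<^sup>2"
    proof eventually_elim
      case (elim w)
      then have "(Y (w(i := x)))\<^sup>2 \<le> vbar^2" by (intro power_mono) auto
      then show ?case by auto
    qed
  qed
qed

lemma gg_bound:
  assumes x: "0 < x" "x \<le> vbar"
  shows "\<bar>gg i x\<bar> \<le> vbar * pp i x"
proof -
  note I = fixints[OF x, of i]
  have "\<bar>gg i x\<bar> \<le> (\<integral>w. \<bar>Y (w(i := x)) * al i (w(i := x))\<bar> \<partial>MM)"
    unfolding gg_def by (rule integral_abs_bound)
  also have "\<dots> \<le> (\<integral>w. vbar * al i (w(i := x)) \<partial>MM)"
  proof (rule integral_mono_AE)
    show "integrable MM (\<lambda>w. \<bar>Y (w(i := x)) * al i (w(i := x))\<bar>)" using I(1) by auto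
    show "integrable MM (\<lambda>w. vbar * al i (w(i := x)))" using I(2) by auto
    show "AE w in MM. \<bar>Y (w(i := x)) * al i (w(i := x))\<bar> \<le> vbar * al i (w(i := x))"
      using Yfix_bound[OF x, of i] by eventually_elim auto
  qed
  also have "\<dots> = vbar * pp i x" unfolding pp_def by simp
  finally show ?thesis .
qed

lemma pp_nonneg: "0 \<le> pp i x" unfolding pp_def by (rule Bochner_Integration.integral_nonneg) auto
lemma qq_nonneg: "0 \<le> qq i x" unfolding qq_def by (rule Bochner_Integration.integral_nonneg) auto

lemma G1:
  assumes x: "0 < x" "x \<le> vbar"
  shows "bb i x * pp i x = gg i x"
proof (cases "pp i x = 0")
  case True
  then show ?thesis using gg_bound[OF x, of i] by (simp add: bid_eq)
next
  case False
  then show ?thesis using x by (simp add: bid_eq)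
qed

lemma G2:
  assumes x: "0 < x" "x \<le> vbar"
  shows "(bb i x)\<^sup>2 * pp i x \<le> qq i x"
proof (cases "pp i x = 0")
  case True
  then show ?thesis using qq_nonneg by simp
next
  case False
  note I = fixints[OF x, of i]
  define c where "c = gg i x / pp i x"
  have bc: "bb i x = c" using x by (simp add: bid_eq c_def)
  have "0 \<le> (\<integral>w. (Y (w(i := x)) - c)\<^sup>2 * al i (w(i := x)) \<partial>MM)"
    by (rule Bochner_Integration.integral_nonneg) auto
  also have "(\<integral>w. (Y (w(i := x)) - c)\<^sup>2 * al i (w(i := x)) \<partial>MM) =
     (\<integral>w. ((Y (w(i := x)))\<^sup>2 * al i (w(i := x)) - (2*c) * (Y (w(i := x)) * al i (w(i := x))))
        + c^2 * al i (w(i := x)) \<partial>MM)"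
    by (rule Bochner_Integration.integral_cong) (simp_all add: power2_eq_square algebra_simps)
  also have "\<dots> = qq i x - 2 * c * gg i x + c^2 * pp i x"
    using I unfolding qq_def gg_def pp_def by (simp add: integral_add integral_diff)
  finally have "0 \<le> qq i x - 2 * c * gg i x + c^2 * pp i x" .
  moreover have "gg i x = c * pp i x" using False by (simp add: c_def)
  ultimately have "c^2 * pp i x \<le> qq i x" by (simp add: power2_eq_square algebra_simps)
  then show ?thesis using bc by simp
qed

lemma bb_bound:
  assumes x: "0 < x" "x \<le> vbar"
  shows "\<bar>bb i x\<bar> \<le> vbar"
proof (cases "pp i x = 0")
  case True
  then show ?thesis using x vb by (simp add: bid_eq)
next
  case False
  then have "0 < pp i x" using pp_nonneg[of i x] by simp
  then show ?thesis using gg_bound[OF x, of i] x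
    by (simp add: bid_eq abs_divide divide_le_eq)
qed

end



context
  fixes n k :: nat and f :: "real \<Rightarrow> real" and vbar :: real
  assumes k1: "1 \<le> k" and kn: "k < n" and vb: "vbar > 0"
    and fm: "f \<in> borel_measurable borel"
    and f1: "(\<integral>\<^sup>+x. ennreal (f x * indicator {0..vbar} x) \<partial>lborel) = 1"
begin

abbreviation "PE \<equiv> value_dist f vbar"
abbreviation "ME \<equiv> profile_dist n f vbar"
abbreviation "YY v \<equiv> order_stat n v (k+1)"
abbreviation "aL i v \<equiv> (of_bool (eff_alloc n k i v) :: real)"
abbreviation "bB i \<equiv> bid_fn n k f vbar i"

lemmas ctx = k1 kn vb fm f1
lemmas eAE_M = AE_M[OF ctx]
lemmas ecompM = compM[OF ctx]
lemmas eprobM = probM[OF ctx]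
lemmas eAE_P = AE_P[OF ctx]
lemmas edecomp = decomp[OF ctx]
lemmas intM' = intM[OF ctx]
lemmas bb_bound' = bb_bound[OF ctx]
lemmas bb_meas' = bb_meas[OF ctx]
lemmas Ymeas' = Ymeas[OF ctx]
lemmas almeas' = almeas[OF ctx]
lemmas G1' = G1[OF ctx]
lemmas G2' = G2[OF ctx]
lemmas pp_def' = pp_def[OF ctx]
lemmas gg_def' = gg_def[OF ctx]
lemmas qq_def' = qq_def[OF ctx]

lemma km': "k + 1 - 1 < n" using kn by simp

lemma AE_Y: "AE v in ME. 0 \<le> YY v \<and> YY v \<le> vbar"
  using eAE_M
proof eventually_elim
  case (elim v)
  then have "\<forall>j<n. 0 \<le> v j \<and> v j \<le> vbar" by (force simp: less_imp_le)
  then show ?case using order_stat_bounds[OF km'] by blast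
qed

lemma AE_b: "AE v in ME. \<forall>i\<in>{..<n}. \<bar>bB i (v i)\<bar> \<le> vbar"
  using eAE_M by eventually_elim (auto intro: bb_bound')

lemma bvm: "i < n \<Longrightarrow> (\<lambda>v. bB i (v i)) \<in> borel_measurable ME"
  by (rule measurable_compose[OF ecompM bb_meas'])

lemma intSq:
  fixes h :: "(nat \<Rightarrow> real) \<Rightarrow> real"
  assumes "h \<in> borel_measurable ME" "AE v in ME. \<bar>h v\<bar> \<le> B"
  shows "integrable ME (\<lambda>v. (h v)\<^sup>2)"
proof -
  have "AE v in ME. \<bar>(h v)\<^sup>2\<bar> \<le> B^2"
    using assms(2)
  proof eventually_elim
    case (elim v)
    then have "\<bar>h v\<bar>^2 \<le> B^2" by (intro power_mono) auto
    then show ?case by simp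
  qed
  then show ?thesis using assms(1) by (intro intM') auto
qed

lemma int1: "i < n \<Longrightarrow> integrable ME (\<lambda>v. aL i v * bB i (v i))"
proof -
  assume i: "i < n"
  have "AE v in ME. \<bar>aL i v * bB i (v i)\<bar> \<le> vbar" using AE_b by eventually_elim (use i in auto)
  then show ?thesis using i by (intro intM' borel_measurable_times almeas' bvm)
qed

lemma int2: "integrable ME (\<lambda>v. YY v * aL i v)"
proof -
  have "AE v in ME. \<bar>YY v * aL i v\<bar> \<le> vbar" using AE_Y by eventually_elim auto
  then show ?thesis by (intro intM' borel_measurable_times almeas' Ymeas')
qed

lemma int3: "i < n \<Longrightarrow> integrable ME (\<lambda>v. aL i v * (bB i (v i))\<^sup>2)"
proof -
  assume i: "i < n"
  have "AE v in ME. \<bar>aL i v * (bB i (v i))\<^sup>2\<bar> \<le> vbar^2" using AE_b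
  proof eventually_elim
    case (elim v)
    then have "\<bar>bB i (v i)\<bar>^2 \<le> vbar^2" using i by (intro power_mono) auto
    then show ?case by auto
  qed
  then show ?thesis using i by (intro intM' borel_measurable_times borel_measurable_power almeas' bvm)
qed

lemma int4: "integrable ME (\<lambda>v. (YY v)\<^sup>2 * aL i v)"
proof -
  have "AE v in ME. \<bar>(YY v)\<^sup>2 * aL i v\<bar> \<le> vbar^2" using AE_Y
  proof eventually_elim
    case (elim v)
    then have "(YY v)^2 \<le> vbar^2" by (intro power_mono) auto
    then show ?case by auto
  qed
  then show ?thesis by (intro intM' borel_measurable_times borel_measurable_power almeas' Ymeas')
qed

lemma E1: "i < n \<Longrightarrow> integral\<^sup>L ME (\<lambda>v. aL i v * bB i (v i)) = integral\<^sup>L ME (\<lambda>v. YY v * aL i v)"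
proof -
  assume i: "i < n"
  note d1 = edecomp[OF i int1[OF i]]
  note d2 = edecomp[OF i int2[of i]]
  show ?thesis unfolding d1(2) d2(2)
  proof (rule integral_cong_AE)
    show "(\<lambda>x. \<integral>w. aL i (w(i := x)) * bB i ((w(i := x)) i) \<partial>ME) \<in> borel_measurable PE"
      using d1(1) by auto
    show "(\<lambda>x. \<integral>w. YY (w(i := x)) * aL i (w(i := x)) \<partial>ME) \<in> borel_measurable PE"
      using d2(1) by auto
    show "AE x in PE. (\<integral>w. aL i (w(i := x)) * bB i ((w(i := x)) i) \<partial>ME) =
       (\<integral>w. YY (w(i := x)) * aL i (w(i := x)) \<partial>ME)"
      using eAE_P
    proof eventually_elim
      case (elim x)
      then have "bB i x * pp n k f vbar i x = gg n k f vbar i x" using G1' by auto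
      then show ?case by (simp add: pp_def' gg_def' mult.commute)
    qed
  qed
qed

lemma E2: "i < n \<Longrightarrow> integral\<^sup>L ME (\<lambda>v. aL i v * (bB i (v i))\<^sup>2) \<le> integral\<^sup>L ME (\<lambda>v. (YY v)\<^sup>2 * aL i v)"
proof -
  assume i: "i < n"
  note d1 = edecomp[OF i int3[OF i]]
  note d2 = edecomp[OF i int4[of i]]
  show ?thesis unfolding d1(2) d2(2)
  proof (rule integral_mono_AE)
    show "integrable PE (\<lambda>x. \<integral>w. aL i (w(i := x)) * (bB i ((w(i := x)) i))\<^sup>2 \<partial>ME)"
      using d1(1) by auto
    show "integrable PE (\<lambda>x. \<integral>w. (YY (w(i := x)))\<^sup>2 * aL i (w(i := x)) \<partial>ME)"
      using d2(1) by auto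
    show "AE x in PE. (\<integral>w. aL i (w(i := x)) * (bB i ((w(i := x)) i))\<^sup>2 \<partial>ME) \<le>
       (\<integral>w. (YY (w(i := x)))\<^sup>2 * aL i (w(i := x)) \<partial>ME)"
      using eAE_P
    proof eventually_elim
      case (elim x)
      then have "(bB i x)\<^sup>2 * pp n k f vbar i x \<le> qq n k f vbar i x" using G2' by auto
      then show ?case by (simp add: pp_def' qq_def' mult.commute)
    qed
  qed
qed

lemma sumal: "(\<Sum>i<n. aL i v) = real k"
  using sum_winners[of k n v] kn by simp

lemma CS: "(\<Sum>i<n. aL i v * c i)\<^sup>2 \<le> real k * (\<Sum>i<n. aL i v * (c i)\<^sup>2)"
proof -
  have "(\<Sum>i<n. aL i v * (aL i v * c i))\<^sup>2 \<le> (\<Sum>i<n. (aL i v)\<^sup>2) * (\<Sum>i<n. (aL i v * c i)\<^sup>2)"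
    by (rule Cauchy_Schwarz_ineq_sum)
  moreover have "(\<Sum>i<n. aL i v * (aL i v * c i)) = (\<Sum>i<n. aL i v * c i)"
    by (intro sum.cong) auto
  moreover have "(\<Sum>i<n. (aL i v)\<^sup>2) = (\<Sum>i<n. aL i v)" by (intro sum.cong) auto
  moreover have "(\<Sum>i<n. (aL i v * c i)\<^sup>2) = (\<Sum>i<n. aL i v * (c i)\<^sup>2)"
    by (intro sum.cong) (auto simp: power_mult_distrib)
  ultimately show ?thesis using sumal[of v] by simp
qed

lemma RD_eq: "rev_disc n k f vbar = (\<lambda>v. \<Sum>i<n. aL i v * bB i (v i))"
  unfolding rev_disc_def ..

lemma RD_meas: "rev_disc n k f vbar \<in> borel_measurable ME"
  unfolding RD_eq by (intro borel_measurable_sum borel_measurable_times almeas' bvm) auto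

lemma RD_bound: "AE v in ME. \<bar>rev_disc n k f vbar v\<bar> \<le> real n * vbar"
  using AE_b
proof eventually_elim
  case (elim v)
  have "\<bar>rev_disc n k f vbar v\<bar> \<le> (\<Sum>i<n. \<bar>aL i v * bB i (v i)\<bar>)"
    unfolding RD_eq by (rule sum_abs)
  also have "\<dots> \<le> of_nat (card {..<n}) * vbar"
    using elim by (intro sum_bounded_above) auto
  finally show ?case by simp
qed

lemma RU_meas: "rev_unif n k \<in> borel_measurable ME"
proof -
  have "(\<lambda>v. real k * YY v) \<in> borel_measurable ME" using Ymeas' by simp
  then show ?thesis unfolding rev_unif_def[abs_def] by simp
qed

lemma RU_bound: "AE v in ME. \<bar>rev_unif n k v\<bar> \<le> real k * vbar"
  using AE_Y by eventually_elim (auto simp: rev_unif_def intro: mult_left_mono)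

lemma main_ineq:
  "var ME (rev_disc n k f vbar) \<le> var ME (rev_unif n k)"
proof -
  interpret M: prob_space ME by (rule eprobM)
  define RD where "RD = rev_disc n k f vbar"
  define RU where "RU = rev_unif n k"
  have iRD: "integrable ME RD" unfolding RD_def using RD_meas RD_bound by (rule intM')
  have iRD2: "integrable ME (\<lambda>v. (RD v)\<^sup>2)" unfolding RD_def using RD_meas RD_bound by (rule intSq)
  have iRU: "integrable ME RU" unfolding RU_def using RU_meas RU_bound by (rule intM')
  have iRU2: "integrable ME (\<lambda>v. (RU v)\<^sup>2)" unfolding RU_def using RU_meas RU_bound by (rule intSq)
  have eq1: "integral\<^sup>L ME RD = integral\<^sup>L ME RU"
  proof -
    have "integral\<^sup>L ME RD = (\<Sum>i<n. integral\<^sup>L ME (\<lambda>v. aL i v * bB i (v i)))"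
      unfolding RD_def RD_eq by (rule Bochner_Integration.integral_sum[where f="\<lambda>i v. aL i v * bB i (v i)"]) (auto intro: int1)
    also have "\<dots> = (\<Sum>i<n. integral\<^sup>L ME (\<lambda>v. YY v * aL i v))"
      using E1 by (intro sum.cong) auto
    also have "\<dots> = integral\<^sup>L ME (\<lambda>v. \<Sum>i<n. YY v * aL i v)"
      by (rule Bochner_Integration.integral_sum[where f="\<lambda>i v. YY v * aL i v", symmetric]) (rule int2)
    also have "\<dots> = integral\<^sup>L ME RU"
    proof (rule Bochner_Integration.integral_cong)
      fix v
      have "(\<Sum>i<n. YY v * aL i v) = YY v * (\<Sum>i<n. aL i v)" by (simp add: sum_distrib_left)
      then show "(\<Sum>i<n. YY v * aL i v) = RU v" unfolding RU_def rev_unif_def using sumal[of v] by simp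
    qed simp
    finally show ?thesis .
  qed
  have le2: "integral\<^sup>L ME (\<lambda>v. (RD v)\<^sup>2) \<le> integral\<^sup>L ME (\<lambda>v. (RU v)\<^sup>2)"
  proof -
    have "integral\<^sup>L ME (\<lambda>v. (RD v)\<^sup>2) \<le> integral\<^sup>L ME (\<lambda>v. real k * (\<Sum>i<n. aL i v * (bB i (v i))\<^sup>2))"
    proof (rule Bochner_Integration.integral_mono)
      show "integrable ME (\<lambda>v. real k * (\<Sum>i<n. aL i v * (bB i (v i))\<^sup>2))"
      proof -
        have "integrable ME (\<lambda>v. \<Sum>i<n. aL i v * (bB i (v i))\<^sup>2)"
        proof (rule Bochner_Integration.integrable_sum)
          fix i assume "i \<in> {..<n}"
          then show "integrable ME (\<lambda>v. aL i v * (bB i (v i))\<^sup>2)" by (intro int3) simp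
        qed
        then show ?thesis by simp
      qed
      fix v show "(RD v)\<^sup>2 \<le> real k * (\<Sum>i<n. aL i v * (bB i (v i))\<^sup>2)"
        unfolding RD_def RD_eq by (rule CS)
    qed (rule iRD2)
    also have "\<dots> = real k * (\<Sum>i<n. integral\<^sup>L ME (\<lambda>v. aL i v * (bB i (v i))\<^sup>2))"
    proof -
      have "integral\<^sup>L ME (\<lambda>v. \<Sum>i<n. aL i v * (bB i (v i))\<^sup>2) = (\<Sum>i<n. integral\<^sup>L ME (\<lambda>v. aL i v * (bB i (v i))\<^sup>2))"
        by (rule Bochner_Integration.integral_sum) (rule int3, simp)
      then show ?thesis by (simp only: integral_mult_right_zero)
    qed
    also have "\<dots> \<le> real k * (\<Sum>i<n. integral\<^sup>L ME (\<lambda>v. (YY v)\<^sup>2 * aL i v))"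
      using E2 by (intro mult_left_mono sum_mono) auto
    also have "\<dots> = real k * integral\<^sup>L ME (\<lambda>v. \<Sum>i<n. (YY v)\<^sup>2 * aL i v)"
    proof -
      have "integral\<^sup>L ME (\<lambda>v. \<Sum>i<n. (YY v)\<^sup>2 * aL i v) = (\<Sum>i<n. integral\<^sup>L ME (\<lambda>v. (YY v)\<^sup>2 * aL i v))"
        by (rule Bochner_Integration.integral_sum) (rule int4)
      then show ?thesis by simp
    qed
    also have "\<dots> = integral\<^sup>L ME (\<lambda>v. (RU v)\<^sup>2)"
    proof -
      have "\<And>v. (\<Sum>i<n. (YY v)\<^sup>2 * aL i v) = real k * (YY v)\<^sup>2"
        using sumal by (simp add: sum_distrib_left[symmetric] mult.commute)
      then have "(\<lambda>v. \<Sum>i<n. (YY v)\<^sup>2 * aL i v) = (\<lambda>v. real k * (YY v)\<^sup>2)"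
        by (rule ext)
      moreover have "(\<lambda>v. (RU v)\<^sup>2) = (\<lambda>v. real k * (real k * (YY v)\<^sup>2))"
        unfolding RU_def rev_unif_def by (rule ext) (simp add: power2_eq_square)
      ultimately show ?thesis by (simp only: integral_mult_right_zero)
    qed
    finally show ?thesis .
  qed
  have "var ME RD = integral\<^sup>L ME (\<lambda>v. (RD v)\<^sup>2) - (integral\<^sup>L ME RD)\<^sup>2"
    unfolding var_def by (rule M.variance_eq[OF iRD iRD2])
  also have "\<dots> \<le> integral\<^sup>L ME (\<lambda>v. (RU v)\<^sup>2) - (integral\<^sup>L ME RU)\<^sup>2"
    using le2 eq1 by simp
  also have "\<dots> = var ME RU"
    unfolding var_def by (rule M.variance_eq[OF iRU iRU2, symmetric])
  finally show ?thesis unfolding RD_def RU_def .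
qed

end



theorem mainTheorem15:
  fixes n k :: nat and f :: "real \<Rightarrow> real" and vbar :: real
  assumes "1 \<le> k" and "k < n"
    and "vbar > 0"
    and "f \<in> borel_measurable borel"
    and "\<And>x. x \<in> {0..vbar} \<Longrightarrow> f x > 0"
    and "(\<integral>\<^sup>+x. ennreal (f x * indicator {0..vbar} x) \<partial>lborel) = 1"
  shows "var (profile_dist n f vbar) (rev_disc n k f vbar)
         \<le> var (profile_dist n f vbar) (rev_unif n k)"
  using main_ineq[OF assms(1,2,3,4,6)] .

end
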